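(* Fix $d\ge2$. There exists $C>0$ such that for all $n\ge1$, $$\mathrm{card}\,\mathrm{Diag}(n)\le C n^{d-1}.$$
   Context: Consider the tessellation of $\mathbb{R}^d$ by the unit cubes $k+[0,1]^d$, $k\in\mathbb{Z}^d$; faces are faces of these cubes. For faces $A,B$ of dimension at most $d-2$, the diagonal $\gamma_{A,B}$ is the set of oriented segments starting in $A$ and ending in $B$ (not meeting other faces of dimension at most $d-2$ in between); $A,B$ are at combinatorial length $n$ if every such segment passes through $n$ cubes, and then $\gamma_{A,B}$ has combinatorial length $n$. $\mathrm{Diag}(n)$ is the set of diagonals of combinatorial length $n$ whose initial segment lies in $[0,1]^d$. *)

theory Defs
  imports "HOL-Analysis.Analysis"
begin

definition unit_cube :: "int^'d \<Rightarrow> (real^'d) set" where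
  "unit_cube k = {x. \<forall>i. of_int (k$i) \<le> x$i \<and> x$i \<le> of_int (k$i) + 1}"

definition tess_face :: "int^'d \<Rightarrow> 'd set \<Rightarrow> (real^'d) set" where
  "tess_face m S = {x. \<forall>i. (i \<in> S \<longrightarrow> x$i = of_int (m$i)) \<and>
                            (i \<notin> S \<longrightarrow> of_int (m$i) \<le> x$i \<and> x$i \<le> of_int (m$i) + 1)}"

text \<open>Faces of dimension at most d-2 (i.e. at least two fixed coordinates).\<close>
definition low_faces :: "(real^'d) set set" where
  "low_faces = {tess_face m S | m S. 2 \<le> card S}"

definition skeleton :: "(real^'d) set" where
  "skeleton = \<Union> low_faces"

definition diagonal :: "(real^'d) set \<Rightarrow> (real^'d) set \<Rightarrow> ((real^'d) \<times> (real^'d)) set" where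
  "diagonal A B = {(a,b). a \<in> A \<and> b \<in> B \<and> a \<noteq> b \<and> open_segment a b \<inter> skeleton = {}}"

definition cubes_crossed :: "(real^'d) \<Rightarrow> (real^'d) \<Rightarrow> nat" where
  "cubes_crossed a b = card {k. closed_segment a b \<inter> interior (unit_cube k) \<noteq> {}}"

definition comb_length :: "(real^'d) set \<Rightarrow> (real^'d) set \<Rightarrow> nat \<Rightarrow> bool" where
  "comb_length A B n \<longleftrightarrow> (\<forall>(a,b) \<in> diagonal A B. cubes_crossed a b = n)"

definition initial_in_unit_cube :: "(real^'d) \<Rightarrow> (real^'d) \<Rightarrow> bool" where
  "initial_in_unit_cube a b \<longleftrightarrow>
     (\<exists>\<epsilon>>0. closed_segment a (a + \<epsilon> *\<^sub>R (b - a)) \<subseteq> unit_cube 0)"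

definition Diag :: "nat \<Rightarrow> (((real^'d) \<times> (real^'d)) set) set" where
  "Diag n = {diagonal A B | A B. A \<in> low_faces \<and> B \<in> low_faces \<and> diagonal A B \<noteq> {}
               \<and> comb_length A B n
               \<and> (\<forall>(a,b) \<in> diagonal A B. initial_in_unit_cube a b)}"

end

theory Submission
  imports Defs
begin


lemma unit_cube_cbox: "unit_cube k = cbox (\<chi> i. of_int (k$i)) (\<chi> i. of_int (k$i) + 1)"
  unfolding unit_cube_def by (auto simp: mem_box_cart)

lemma interior_unit_cube: "interior (unit_cube k) = {x. \<forall>i. of_int (k$i) < x$i \<and> x$i < of_int (k$i) + 1}"
  unfolding unit_cube_cbox interior_cbox by (auto simp: mem_box_cart)

lemma two_int_skeleton:
  fixes x :: "real^'d"
  assumes "i \<noteq> j" "x$i \<in> \<int>" "x$j \<in> \<int>"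
  shows "x \<in> skeleton"
proof -
  have fl: "of_int \<lfloor>x$l\<rfloor> = x$l" if "x$l \<in> \<int>" for l
  proof -
    from that obtain z where "x$l = of_int z" by (auto elim: Ints_cases)
    then show ?thesis by simp
  qed
  have mem: "x \<in> tess_face (\<chi> l. \<lfloor>x$l\<rfloor>) {i,j}"
    unfolding tess_face_def mem_Collect_eq
  proof (intro allI conjI impI)
    fix l
    show "l \<in> {i,j} \<Longrightarrow> x$l = of_int ((\<chi> l. \<lfloor>x$l\<rfloor>) $ l)" using fl assms by auto
    show "of_int ((\<chi> l. \<lfloor>x$l\<rfloor>) $ l) \<le> x$l" by simp
    show "x$l \<le> of_int ((\<chi> l. \<lfloor>x$l\<rfloor>) $ l) + 1" by simp
  qed
  have c2: "card {i,j} = 2" using assms by simp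
  have "\<exists>m S. tess_face (\<chi> l. \<lfloor>x$l\<rfloor>) {i,j} = tess_face m S \<and> 2 \<le> card S"
    by (intro exI[of _ "\<chi> l. \<lfloor>x$l\<rfloor>"] exI[of _ "{i,j}"]) (simp add: c2)
  then have "tess_face (\<chi> l. \<lfloor>x$l\<rfloor>) {i,j} \<in> low_faces"
    unfolding low_faces_def mem_Collect_eq .
  then show ?thesis unfolding skeleton_def using mem by (rule UnionI)
qed

lemma face_bounds:
  assumes "x \<in> tess_face m S"
  shows "of_int (m$i) \<le> x$i \<and> x$i \<le> of_int (m$i) + 1"
  using assms unfolding tess_face_def by (cases "i \<in> S") auto

definition pt :: "real^'d \<Rightarrow> real^'d \<Rightarrow> real \<Rightarrow> real^'d" where
  "pt a b u = (1 - u) *\<^sub>R a + u *\<^sub>R b"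

lemma pt_nth[simp]: "pt a b u $ i = (1 - u) * a$i + u * b$i"
  by (simp add: pt_def)

lemma K_char: "{k. closed_segment a b \<inter> interior (unit_cube k) \<noteq> {}} =
   {k. \<exists>u. 0 \<le> u \<and> u \<le> 1 \<and> (\<forall>i. of_int (k$i) < pt a b u $ i \<and> pt a b u $ i < of_int (k$i) + 1)}"
proof (rule Collect_cong)
  fix k
  show "(closed_segment a b \<inter> interior (unit_cube k) \<noteq> {}) = (\<exists>u. 0 \<le> u \<and> u \<le> 1 \<and> (\<forall>i. of_int (k$i) < pt a b u $ i \<and> pt a b u $ i < of_int (k$i) + 1))"
    unfolding interior_unit_cube
  proof
    assume "closed_segment a b \<inter> {x. \<forall>i. of_int (k$i) < x$i \<and> x$i < of_int (k$i) + 1} \<noteq> {}"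
    then obtain x where "x \<in> closed_segment a b" "\<forall>i. of_int (k$i) < x$i \<and> x$i < of_int (k$i) + 1" by blast
    then show "\<exists>u. 0 \<le> u \<and> u \<le> 1 \<and> (\<forall>i. of_int (k$i) < pt a b u $ i \<and> pt a b u $ i < of_int (k$i) + 1)"
      unfolding in_segment pt_def by metis
  next
    assume "\<exists>u. 0 \<le> u \<and> u \<le> 1 \<and> (\<forall>i. of_int (k$i) < pt a b u $ i \<and> pt a b u $ i < of_int (k$i) + 1)"
    then obtain u where u: "0 \<le> u" "u \<le> 1" "\<forall>i. of_int (k$i) < pt a b u $ i \<and> pt a b u $ i < of_int (k$i) + 1" by blast
    have "pt a b u \<in> closed_segment a b" unfolding in_segment pt_def using u by blast
    then show "closed_segment a b \<inter> {x. \<forall>i. of_int (k$i) < x$i \<and> x$i < of_int (k$i) + 1} \<noteq> {}"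
      using u(3) by blast
  qed
qed



definition sg :: "real \<Rightarrow> real \<Rightarrow> int" where
  "sg x y = (if x < y then 1 else if y < x then -1 else 0)"

lemma p_between:
  fixes x y u :: real assumes "0 \<le> u" "u \<le> 1" "x \<le> y"
  shows "x \<le> (1-u)*x + u*y" "(1-u)*x + u*y \<le> y"
proof -
  have "0 \<le> u*(y-x)" "0 \<le> (1-u)*(y-x)" using assms by auto
  then show "x \<le> (1-u)*x + u*y" "(1-u)*x + u*y \<le> y" by (auto simp: algebra_simps)
qed

lemma p_mono:
  fixes x y u u' :: real assumes "u \<le> u'" "x \<le> y"
  shows "(1-u)*x + u*y \<le> (1-u')*x + u'*y"
proof -
  have "u*(y-x) \<le> u'*(y-x)" using assms by (simp add: mult_right_mono)
  then show ?thesis by (auto simp: algebra_simps)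
qed

lemma coord_bound:
  fixes x y u :: real and k :: int
  assumes "0 \<le> u" "u \<le> 1" "k < (1-u)*x + u*y" "(1-u)*x + u*y < k + 1"
  shows "(if x < y then x - 1 else if y < x then -x else -1/2) < real_of_int (sg x y * k)
       \<and> real_of_int (sg x y * k) < (if x < y then y else if y < x then 1 - y else 1/2)"
proof (cases "x < y")
  case True
  then show ?thesis using p_between[of u x y] assms by (auto simp: sg_def)
next
  case False
  note F = this
  show ?thesis
  proof (cases "y < x")
    case True
    then show ?thesis using p_between[of u y x] assms F by (auto simp: sg_def algebra_simps)
  next
    case False
    then show ?thesis using F by (simp add: sg_def)
  qed
qed

lemma coord_mono:
  fixes x y u u' :: real and k k' :: int
  assumes "u \<le> u'" "k < (1-u)*x + u*y" "(1-u)*x + u*y < k + 1"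
     "k' < (1-u')*x + u'*y" "(1-u')*x + u'*y < k' + 1"
  shows "sg x y * k \<le> sg x y * k' \<and> (sg x y = 0 \<longrightarrow> k = k')"
proof (cases "x < y")
  case True
  then have "(1-u)*x + u*y \<le> (1-u')*x + u'*y" using p_mono[of u u' x y] assms by simp
  then have "real_of_int k < k' + 1" using assms by linarith
  then show ?thesis using True by (simp add: sg_def)
next
  case False
  note F = this
  show ?thesis
  proof (cases "y < x")
    case True
    have "(1-u)*y + u*x \<le> (1-u')*y + u'*x" using p_mono[of "1-u'" "1-u" y x] assms True
      by (simp add: algebra_simps)
    then have "(1-u')*x + u'*y \<le> (1-u)*x + u*y" by (simp add: algebra_simps)
    then have "real_of_int k' < k + 1" using assms by linarith
    then show ?thesis using True by (simp add: sg_def)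
  next
    case False
    then have "x = y" using F by simp
    then have "real_of_int k < k' + 1" "real_of_int k' < k + 1" using assms by (auto simp: algebra_simps)
    then show ?thesis by (simp add: sg_def)
  qed
qed

lemma int_interval_card:
  fixes L U :: real assumes LU: "L \<le> U"
  shows "finite {v::int. L < v \<and> v < U} \<and> real (card {v::int. L < v \<and> v < U}) \<le> U - L + 1"
proof -
  have eq: "{v::int. L < v \<and> v < U} = {\<lfloor>L\<rfloor>+1 .. \<lceil>U\<rceil>-1}"
  proof -
    have h1: "L < of_int v \<longleftrightarrow> \<lfloor>L\<rfloor> + 1 \<le> v" for v using floor_less_iff[of L v] by linarith
    have h2: "of_int v < U \<longleftrightarrow> v \<le> \<lceil>U\<rceil> - 1" for v using less_ceiling_iff[of v U] by linarith
    show ?thesis using h1 h2 by auto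
  qed
  have "real (nat (\<lceil>U\<rceil> - 1 - (\<lfloor>L\<rfloor> + 1) + 1)) \<le> U - L + 1"
  proof -
    have "real (nat (\<lceil>U\<rceil> - 1 - (\<lfloor>L\<rfloor> + 1) + 1)) = max 0 (real_of_int (\<lceil>U\<rceil> - 1 - (\<lfloor>L\<rfloor> + 1) + 1))"
      by simp
    then show ?thesis using ceiling_correct[of U] of_int_floor_le[of L] LU by linarith
  qed
  then show ?thesis unfolding eq by simp
qed

lemma upper_bound:
  fixes a b :: "real^'d"
  shows "finite {k. closed_segment a b \<inter> interior (unit_cube k) \<noteq> {}} \<and>
     real (cubes_crossed a b) \<le> (\<Sum>i\<in>UNIV. \<bar>b$i - a$i\<bar>) + CARD('d) + 1"
proof -
  define K where "K = {k. closed_segment a b \<inter> interior (unit_cube k) \<noteq> {}}"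
  define psi where "psi k = (\<Sum>i\<in>UNIV. sg (a$i) (b$i) * k$i)" for k :: "int^'d"
  define lr where "lr i = (if a$i < b$i then a$i - 1 else if b$i < a$i then -(a$i) else -1/2)" for i
  define ur where "ur i = (if a$i < b$i then b$i else if b$i < a$i then 1 - b$i else 1/2)" for i
  have Kc: "K = {k. \<exists>u. 0 \<le> u \<and> u \<le> 1 \<and> (\<forall>i. of_int (k$i) < pt a b u $ i \<and> pt a b u $ i < of_int (k$i) + 1)}"
    unfolding K_def K_char ..
  have inj: "inj_on psi K"
  proof (rule inj_onI)
    fix k k' assume "k \<in> K" "k' \<in> K" and eq: "psi k = psi k'"
    then obtain u u' where u: "0 \<le> u" "u \<le> 1" "\<forall>i. of_int (k$i) < pt a b u $ i \<and> pt a b u $ i < of_int (k$i) + 1"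
      and u': "0 \<le> u'" "u' \<le> 1" "\<forall>i. of_int (k'$i) < pt a b u' $ i \<and> pt a b u' $ i < of_int (k'$i) + 1"
      unfolding Kc by blast
    have gen: "k1 = k2" if "u1 \<le> u2" "\<forall>i. of_int (k1$i) < pt a b u1 $ i \<and> pt a b u1 $ i < of_int (k1$i) + 1"
       "\<forall>i. of_int (k2$i) < pt a b u2 $ i \<and> pt a b u2 $ i < of_int (k2$i) + 1" "psi k1 = psi k2" for u1 u2 k1 k2
    proof -
      have m: "sg (a$i) (b$i) * k1$i \<le> sg (a$i) (b$i) * k2$i \<and> (sg (a$i) (b$i) = 0 \<longrightarrow> k1$i = k2$i)" for i
        using coord_mono[of u1 u2 "k1$i" "a$i" "b$i" "k2$i"] that(1-3) by auto
      have "(\<Sum>i\<in>UNIV. sg (a$i) (b$i) * k2$i - sg (a$i) (b$i) * k1$i) = 0"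
        using that(4) unfolding psi_def by (simp add: sum_subtractf)
      then have "\<forall>i\<in>UNIV. sg (a$i) (b$i) * k2$i - sg (a$i) (b$i) * k1$i = 0"
        using m by (subst sum_nonneg_eq_0_iff[symmetric]) auto
      then have "k1$i = k2$i" for i using m[of i] by (auto simp: sg_def split: if_splits)
      then show ?thesis by (simp add: vec_eq_iff)
    qed
    show "k = k'"
    proof (cases "u \<le> u'")
      case True then show ?thesis using gen u u' eq by blast
    next
      case False then show ?thesis using gen[of u' u k' k] u u' eq by auto
    qed
  qed
  have img: "psi ` K \<subseteq> {v::int. (\<Sum>i\<in>UNIV. lr i) < v \<and> v < (\<Sum>i\<in>UNIV. ur i)}"
  proof
    fix v assume "v \<in> psi ` K"
    then obtain k where k: "k \<in> K" "v = psi k" by blast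
    then obtain u where u: "0 \<le> u" "u \<le> 1" "\<forall>i. of_int (k$i) < pt a b u $ i \<and> pt a b u $ i < of_int (k$i) + 1"
      unfolding Kc by blast
    have cb: "lr i < real_of_int (sg (a$i) (b$i) * k$i) \<and> real_of_int (sg (a$i) (b$i) * k$i) < ur i" for i
      unfolding lr_def ur_def using coord_bound[of u "k$i" "a$i" "b$i"] u by auto
    have "(\<Sum>i\<in>UNIV. lr i) < (\<Sum>i\<in>UNIV. real_of_int (sg (a$i) (b$i) * k$i))"
      by (rule sum_strict_mono) (use cb in auto)
    moreover have "(\<Sum>i\<in>UNIV. real_of_int (sg (a$i) (b$i) * k$i)) < (\<Sum>i\<in>UNIV. ur i)"
      by (rule sum_strict_mono) (use cb in auto)
    ultimately show "v \<in> {v::int. (\<Sum>i\<in>UNIV. lr i) < v \<and> v < (\<Sum>i\<in>UNIV. ur i)}"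
      using k unfolding psi_def by simp
  qed
  have "(\<Sum>i\<in>UNIV. lr i) \<le> (\<Sum>i\<in>UNIV. ur i)"
    by (rule sum_mono) (auto simp: lr_def ur_def)
  note ic = int_interval_card[OF this]
  have finK: "finite K" using finite_imageD[OF finite_subset[OF img] inj] ic by blast
  have "card K \<le> card {v::int. (\<Sum>i\<in>UNIV. lr i) < v \<and> v < (\<Sum>i\<in>UNIV. ur i)}"
    using card_inj_on_le[OF inj img] ic by blast
  moreover have "(\<Sum>i\<in>UNIV. ur i) - (\<Sum>i\<in>UNIV. lr i) = (\<Sum>i\<in>UNIV. \<bar>b$i - a$i\<bar> + 1)"
    unfolding sum_subtractf[symmetric] by (rule sum.cong) (auto simp: lr_def ur_def)
  ultimately have "real (card K) \<le> (\<Sum>i\<in>UNIV. \<bar>b$i - a$i\<bar> + 1) + 1"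
    using ic by linarith
  then show ?thesis using finK unfolding cubes_crossed_def K_def[symmetric]
    by (simp add: sum.distrib)
qed



lemma int_interval_card2:
  fixes L U :: real
  shows "finite {v::int. L < v \<and> v < U} \<and> U - L - 1 \<le> real (card {v::int. L < v \<and> v < U})"
proof -
  have eq: "{v::int. L < v \<and> v < U} = {\<lfloor>L\<rfloor>+1 .. \<lceil>U\<rceil>-1}"
  proof -
    have h1: "L < of_int v \<longleftrightarrow> \<lfloor>L\<rfloor> + 1 \<le> v" for v using floor_less_iff[of L v] by linarith
    have h2: "of_int v < U \<longleftrightarrow> v \<le> \<lceil>U\<rceil> - 1" for v using less_ceiling_iff[of v U] by linarith
    show ?thesis using h1 h2 by auto
  qed
  have "real (nat (\<lceil>U\<rceil> - 1 - (\<lfloor>L\<rfloor> + 1) + 1)) \<ge> U - L - 1"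
  proof -
    have "real (nat (\<lceil>U\<rceil> - 1 - (\<lfloor>L\<rfloor> + 1) + 1)) = max 0 (real_of_int (\<lceil>U\<rceil> - 1 - (\<lfloor>L\<rfloor> + 1) + 1))"
      by simp
    then show ?thesis using le_of_int_ceiling[of U] of_int_floor_le[of L] by linarith
  qed
  then show ?thesis unfolding eq by simp
qed

lemma p_strict:
  fixes x y u u' :: real assumes "u < u'" "x < y"
  shows "(1-u)*x + u*y < (1-u')*x + u'*y"
proof -
  have "u*(y-x) < u'*(y-x)" using assms by (simp add: mult_strict_right_mono)
  then show ?thesis by (auto simp: algebra_simps)
qed

lemma ev_coord:
  fixes x y u :: real and k :: int
  assumes "(k < (1-u)*x + u*y \<or> (x < y \<and> k \<le> (1-u)*x + u*y)) \<and>
           ((1-u)*x + u*y < of_int k + 1 \<or> (y < x \<and> (1-u)*x + u*y \<le> of_int k + 1))"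
  shows "eventually (\<lambda>e. k < (1-(u+e))*x + (u+e)*y \<and> (1-(u+e))*x + (u+e)*y < of_int k+1) (at_right 0)"
proof -
  have eq: "(1-(u+e))*x + (u+e)*y = ((1-u)*x + u*y) + e*(y-x)" for e by (simp add: algebra_simps)
  have tl: "((\<lambda>e. ((1-u)*x + u*y) + e*(y-x)) \<longlongrightarrow> ((1-u)*x + u*y) + 0*(y-x)) (at_right 0)"
    by (intro tendsto_intros)
  have e1: "eventually (\<lambda>e. k < ((1-u)*x + u*y) + e*(y-x)) (at_right 0)"
  proof (cases "k < (1-u)*x + u*y")
    case True then show ?thesis using order_tendstoD(1)[OF tl] by simp
  next
    case False
    then have "x < y" "k \<le> (1-u)*x + u*y" using assms by auto
    then show ?thesis unfolding eventually_at_right_field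
    proof (intro exI[of _ 1] conjI allI impI)
      fix e :: real assume "0 < e" "e < 1"
      then have "0 < e*(y-x)" using \<open>x<y\<close> by simp
      then show "k < ((1-u)*x + u*y) + e*(y-x)" using \<open>k \<le> (1-u)*x + u*y\<close> by linarith
    qed simp
  qed
  have e2: "eventually (\<lambda>e. ((1-u)*x + u*y) + e*(y-x) < of_int k + 1) (at_right 0)"
  proof (cases "(1-u)*x + u*y < of_int k + 1")
    case True then show ?thesis using order_tendstoD(2)[OF tl] by simp
  next
    case False
    then have "y < x" "(1-u)*x + u*y \<le> of_int k + 1" using assms by auto
    then show ?thesis unfolding eventually_at_right_field
    proof (intro exI[of _ 1] conjI allI impI)
      fix e :: real assume "0 < e" "e < 1"
      then have "e*(y-x) < 0" using \<open>y<x\<close> by (simp add: mult_pos_neg)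
      then show "((1-u)*x + u*y) + e*(y-x) < of_int k + 1" using \<open>(1-u)*x + u*y \<le> of_int k + 1\<close> by linarith
    qed simp
  qed
  show ?thesis unfolding eq using e1 e2 by (rule eventually_conj)
qed



lemma lower_bound:
  fixes a b :: "real^'d"
  assumes sk: "open_segment a b \<inter> skeleton = {}" and ab: "a \<noteq> b"
  shows "(\<Sum>i\<in>UNIV. \<bar>b$i - a$i\<bar>) - CARD('d) \<le> real (cubes_crossed a b)"
proof -
  define K where "K = {k. closed_segment a b \<inter> interior (unit_cube k) \<noteq> {}}"
  have Kc: "K = {k. \<exists>u. 0 \<le> u \<and> u \<le> 1 \<and> (\<forall>i. of_int (k$i) < pt a b u $ i \<and> pt a b u $ i < of_int (k$i) + 1)}"
    unfolding K_def K_char ..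
  have finK: "finite K" using upper_bound[of a b] unfolding K_def by blast
  define I where "I i = {m::int. min (a$i) (b$i) < m \<and> m < max (a$i) (b$i)}" for i
  define P where "P = Sigma UNIV I"
  define tm where "tm p = (of_int (snd p) - a$(fst p)) / (b$(fst p) - a$(fst p))" for p :: "'d \<times> int"
  define g where "g u = (\<chi> j. if a$j \<le> b$j then \<lfloor>pt a b u $ j\<rfloor> else \<lceil>pt a b u $ j\<rceil> - 1)" for u
  have noskel: False if "0 < u" "u < 1" "i \<noteq> j" "pt a b u $ i \<in> \<int>" "pt a b u $ j \<in> \<int>" for u i j
  proof -
    have "pt a b u \<in> open_segment a b" unfolding in_segment pt_def using that ab by blast
    moreover have "pt a b u \<in> skeleton" using two_int_skeleton that by blast
    ultimately show False using sk by blast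
  qed
  have F1: "a$i \<noteq> b$i \<and> 0 < tm (i,m) \<and> tm (i,m) < 1 \<and> pt a b (tm (i,m)) $ i = of_int m" if "(i,m) \<in> P" for i m
  proof -
    have m: "min (a$i) (b$i) < m" "m < max (a$i) (b$i)" using that unfolding P_def I_def by auto
    then have ne: "a$i \<noteq> b$i" by auto
    have t: "0 < tm (i,m) \<and> tm (i,m) < 1"
    proof (cases "a$i < b$i")
      case True then show ?thesis using m unfolding tm_def by (auto simp: divide_simps)
    next
      case False then have "b$i < a$i" using ne by auto
      then show ?thesis using m unfolding tm_def by (auto simp: divide_simps)
    qed
    have "b$i - a$i \<noteq> 0" using ne by simp
    then have "tm (i,m) * (b$i - a$i) = of_int m - a$i" unfolding tm_def by simp
    moreover have "pt a b (tm (i,m)) $ i = a$i + tm (i,m) * (b$i - a$i)" unfolding pt_nth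
      by (simp add: algebra_simps)
    ultimately have "pt a b (tm (i,m)) $ i = of_int m" by simp
    then show ?thesis using ne t by blast
  qed
  define G where "G p = g (tm p)" for p
  have F3: "G p \<in> K" if "p \<in> P" for p
  proof -
    obtain i m where p: "p = (i,m)" by force
    define u where "u = tm (i,m)"
    have f1: "a$i \<noteq> b$i" "0 < u" "u < 1" "pt a b u $ i = of_int m" using F1 that p unfolding u_def by auto
    have ev: "eventually (\<lambda>e. of_int (g u $ j) < pt a b (u+e) $ j \<and> pt a b (u+e) $ j < of_int (g u $ j) + 1) (at_right 0)" for j
    proof (cases "a$j < b$j")
      case True
      define k where "k = \<lfloor>(1-u)*a$j + u*b$j\<rfloor>"
      have gj: "g u $ j = k" unfolding g_def k_def using True by simp
      have h: "(real_of_int k < (1-u)*a$j + u*b$j \<or> (a$j < b$j \<and> real_of_int k \<le> (1-u)*a$j + u*b$j)) \<and>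
               ((1-u)*a$j + u*b$j < real_of_int k + 1 \<or> (b$j < a$j \<and> (1-u)*a$j + u*b$j \<le> real_of_int k + 1))"
        unfolding k_def using True by linarith
      show ?thesis unfolding pt_nth gj by (rule ev_coord[OF h])
    next
      case False note F = this
      show ?thesis
      proof (cases "b$j < a$j")
        case True
        define k where "k = \<lceil>(1-u)*a$j + u*b$j\<rceil> - 1"
        have gj: "g u $ j = k" unfolding g_def k_def using True by simp
        have h: "(real_of_int k < (1-u)*a$j + u*b$j \<or> (a$j < b$j \<and> real_of_int k \<le> (1-u)*a$j + u*b$j)) \<and>
                 ((1-u)*a$j + u*b$j < real_of_int k + 1 \<or> (b$j < a$j \<and> (1-u)*a$j + u*b$j \<le> real_of_int k + 1))"
          unfolding k_def using True by linarith
        show ?thesis unfolding pt_nth gj by (rule ev_coord[OF h])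
      next
        case False
        then have eq: "a$j = b$j" using F by simp
        have "j \<noteq> i" using f1 eq by auto
        have ptj: "pt a b v $ j = a$j" for v unfolding pt_nth eq by (simp add: algebra_simps)
        have "a$j \<notin> \<int>"
        proof
          assume "a$j \<in> \<int>"
          then show False using noskel[of u j i] f1 \<open>j \<noteq> i\<close> ptj by auto
        qed
        have ne: "of_int \<lfloor>a$j\<rfloor> \<noteq> a$j"
        proof
          assume eqa: "of_int \<lfloor>a$j\<rfloor> = a$j"
          have "(of_int \<lfloor>a$j\<rfloor> :: real) \<in> \<int>" by (rule Ints_of_int)
          then have "a$j \<in> \<int>" unfolding eqa .
          then show False using \<open>a$j \<notin> \<int>\<close> by simp
        qed
        have "of_int \<lfloor>a$j\<rfloor> < a$j" using ne of_int_floor_le[of "a$j"] by linarith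
        then have lt: "of_int \<lfloor>a$j\<rfloor> < a$j \<and> a$j < of_int \<lfloor>a$j\<rfloor> + 1" by linarith
        have gj: "g u $ j = \<lfloor>a$j\<rfloor>" unfolding g_def using eq by (simp add: ptj del: pt_nth)
        show ?thesis using lt by (simp add: gj ptj del: pt_nth)
      qed
    qed
    have "eventually (\<lambda>e. \<forall>j. of_int (g u $ j) < pt a b (u+e) $ j \<and> pt a b (u+e) $ j < of_int (g u $ j) + 1) (at_right 0)"
      by (rule eventually_all_finite) (rule ev)
    moreover have "eventually (\<lambda>e. 0 < e \<and> e < 1 - u) (at_right (0::real))"
      unfolding eventually_at_right_field using f1 by (intro exI[of _ "1-u"]) auto
    ultimately have "eventually (\<lambda>e. (\<forall>j. of_int (g u $ j) < pt a b (u+e) $ j \<and> pt a b (u+e) $ j < of_int (g u $ j) + 1) \<and> 0 < e \<and> e < 1 - u) (at_right (0::real))"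
      by (rule eventually_conj)
    from eventually_happens'[OF trivial_limit_at_right_real this]
    obtain e where e: "\<forall>j. of_int (g u $ j) < pt a b (u+e) $ j \<and> pt a b (u+e) $ j < of_int (g u $ j) + 1" "0 < e" "e < 1 - u"
      by blast
    have "0 \<le> u + e" "u + e \<le> 1" using e f1 by auto
    then show ?thesis unfolding Kc G_def p u_def[symmetric] using e(1) by blast
  qed
  have F4: "G p \<noteq> G q" if "p \<in> P" "q \<in> P" "tm p < tm q" for p q
  proof -
    obtain i m where p: "p = (i,m)" by force
    obtain i' m' where q: "q = (i',m')" by force
    have f: "a$i' \<noteq> b$i'" "pt a b (tm q) $ i' = of_int m'" using F1 that(2) q by auto
    show ?thesis
    proof (cases "a$i' < b$i'")
      case True
      have "pt a b (tm p) $ i' < pt a b (tm q) $ i'"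
        unfolding pt_nth using p_strict[OF that(3) True] .
      then have "\<lfloor>pt a b (tm p) $ i'\<rfloor> < m'" using f by (simp add: floor_less_iff)
      moreover have "G p $ i' = \<lfloor>pt a b (tm p) $ i'\<rfloor>" "G q $ i' = m'"
        unfolding G_def g_def using True f by (simp_all del: pt_nth)
      ultimately show ?thesis by force
    next
      case False
      then have lt: "b$i' < a$i'" using f by auto
      have "tm q * b$i' + (1 - tm q) * a$i' < tm p * b$i' + (1 - tm p) * a$i'"
        using p_strict[of "1 - tm q" "1 - tm p" "b$i'" "a$i'"] that(3) lt by simp
      then have "pt a b (tm q) $ i' < pt a b (tm p) $ i'"
        unfolding pt_nth by (simp add: algebra_simps)
      then have "m' < \<lceil>pt a b (tm p) $ i'\<rceil>" using f by (simp add: less_ceiling_iff)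
      moreover have "G p $ i' = \<lceil>pt a b (tm p) $ i'\<rceil> - 1" "G q $ i' = m' - 1"
        unfolding G_def g_def using lt f by (simp_all del: pt_nth)
      ultimately show ?thesis by force
    qed
  qed
  have inj: "inj_on G P"
  proof (rule inj_onI)
    fix p q assume pq: "p \<in> P" "q \<in> P" "G p = G q"
    show "p = q"
    proof (cases "tm p = tm q")
      case True
      obtain i m where p: "p = (i,m)" by force
      obtain i' m' where q: "q = (i',m')" by force
      have fp: "0 < tm p" "tm p < 1" "pt a b (tm p) $ i = of_int m" using F1 pq(1) p by auto
      have fq: "pt a b (tm p) $ i' = of_int m'" using F1 pq(2) q True by auto
      have "i = i'"
      proof (rule ccontr)
        assume "i \<noteq> i'"
        then show False using noskel[of "tm p" i i'] fp fq by auto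
      qed
      then show ?thesis using fp fq p q by simp
    next
      case False
      then have "tm p < tm q \<or> tm q < tm p" by linarith
      then show ?thesis
      proof
        assume "tm p < tm q" then show ?thesis using F4[of p q] pq by blast
      next
        assume "tm q < tm p" then show ?thesis using F4[of q p] pq by simp
      qed
    qed
  qed
  have finI: "finite (I i)" for i using int_interval_card2 unfolding I_def by blast
  have cPK: "card P \<le> card K"
    by (rule card_inj_on_le[OF inj]) (use F3 finK in auto)
  have cP: "card P = (\<Sum>i\<in>UNIV. card (I i))"
    unfolding P_def by (rule card_SigmaI) (auto simp: finI)
  have sm: "(\<Sum>i\<in>UNIV. \<bar>b$i - a$i\<bar> - 1) \<le> (\<Sum>i\<in>UNIV. real (card (I i)))"
  proof (rule sum_mono)
    fix i
    have "\<bar>b$i - a$i\<bar> = max (a$i) (b$i) - min (a$i) (b$i)" by auto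
    then show "\<bar>b$i - a$i\<bar> - 1 \<le> real (card (I i))"
      using int_interval_card2[of "min (a$i) (b$i)" "max (a$i) (b$i)"] unfolding I_def by simp
  qed
  have e1: "(\<Sum>i\<in>UNIV. \<bar>b$i - a$i\<bar> - 1) = (\<Sum>i\<in>UNIV. \<bar>b$i - a$i\<bar>) - real CARD('d)"
    by (simp add: sum_subtractf)
  have e2: "(\<Sum>i\<in>UNIV. real (card (I i))) = real (card P)" unfolding cP by simp
  have "real (card P) \<le> real (card K)" using cPK by simp
  then show ?thesis unfolding cubes_crossed_def K_def[symmetric] using sm e1 e2 by linarith
qed



lemma box_card:
  fixes J :: "'d::finite set" and N :: nat
  shows "finite {r::int^'d. \<forall>i. (i\<in>J \<longrightarrow> \<bar>r$i\<bar> \<le> int N) \<and> (i\<notin>J \<longrightarrow> r$i = 0)} \<and>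
         card {r::int^'d. \<forall>i. (i\<in>J \<longrightarrow> \<bar>r$i\<bar> \<le> int N) \<and> (i\<notin>J \<longrightarrow> r$i = 0)} \<le> (2*N+1)^card J"
proof -
  define R where "R = {r::int^'d. \<forall>i. (i\<in>J \<longrightarrow> \<bar>r$i\<bar> \<le> int N) \<and> (i\<notin>J \<longrightarrow> r$i = 0)}"
  define f where "f r = restrict (vec_nth r) J" for r :: "int^'d"
  have inj: "inj_on f R"
  proof (rule inj_onI)
    fix r s assume "r \<in> R" "s \<in> R" "f r = f s"
    then have "r$i = s$i" for i
      unfolding R_def f_def by (cases "i \<in> J") (auto dest: fun_cong[of _ _ i])
    then show "r = s" by (simp add: vec_eq_iff)
  qed
  have img: "f ` R \<subseteq> PiE J (\<lambda>_. {-int N..int N})"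
    unfolding R_def f_def by (auto simp: abs_le_iff)
  have fin: "finite (PiE J (\<lambda>_. {-int N..int N}))" by (simp add: finite_PiE)
  have cp: "card (PiE J (\<lambda>_. {-int N..int N})) = (2*N+1)^card J"
    by (simp add: card_PiE) (simp add: nat_add_distrib nat_mult_distrib)
  show ?thesis unfolding R_def[symmetric]
    using card_inj_on_le[OF inj img fin] finite_imageD[OF finite_subset[OF img fin] inj] cp by simp
qed

lemma M_card:
  fixes n c :: nat
  shows "finite {m::int^'d::finite. int n - int c \<le> (\<Sum>i\<in>UNIV. \<bar>m$i\<bar>) \<and> (\<Sum>i\<in>UNIV. \<bar>m$i\<bar>) \<le> int n + int c} \<and>
         card {m::int^'d. int n - int c \<le> (\<Sum>i\<in>UNIV. \<bar>m$i\<bar>) \<and> (\<Sum>i\<in>UNIV. \<bar>m$i\<bar>) \<le> int n + int c}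
          \<le> (2*(n+c)+1)^(CARD('d) - 1) * ((2*c+1)*2)"
proof -
  define M where "M = {m::int^'d. int n - int c \<le> (\<Sum>i\<in>UNIV. \<bar>m$i\<bar>) \<and> (\<Sum>i\<in>UNIV. \<bar>m$i\<bar>) \<le> int n + int c}"
  obtain j0 :: 'd where True by blast
  define R where "R = {r::int^'d. \<forall>i. (i\<in>UNIV - {j0} \<longrightarrow> \<bar>r$i\<bar> \<le> int (n+c)) \<and> (i\<notin>UNIV - {j0} \<longrightarrow> r$i = 0)}"
  define h where "h m = ((\<chi> i. if i = j0 then 0 else m$i) :: int^'d,
      nat ((\<Sum>i\<in>UNIV. \<bar>m$i\<bar>) - (int n - int c)), 0 \<le> m$j0)" for m :: "int^'d"
  have split: "(\<Sum>i\<in>UNIV. \<bar>m$i\<bar>) = \<bar>m$j0\<bar> + (\<Sum>i\<in>UNIV - {j0}. \<bar>m$i\<bar>)" for m :: "int^'d"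
    by (simp add: sum.remove)
  have inj: "inj_on h M"
  proof (rule inj_onI)
    fix m m' assume mm: "m \<in> M" "m' \<in> M" "h m = h m'"
    have oth: "m$i = m'$i" if "i \<noteq> j0" for i
      using mm(3) that unfolding h_def by (auto simp: vec_eq_iff dest: spec[of _ i])
    have "nat ((\<Sum>i\<in>UNIV. \<bar>m$i\<bar>) - (int n - int c)) = nat ((\<Sum>i\<in>UNIV. \<bar>m'$i\<bar>) - (int n - int c))"
      using mm(3) unfolding h_def by simp
    moreover have "int n - int c \<le> (\<Sum>i\<in>UNIV. \<bar>m$i\<bar>)" "int n - int c \<le> (\<Sum>i\<in>UNIV. \<bar>m'$i\<bar>)"
      using mm(1,2) unfolding M_def by auto
    ultimately have "(\<Sum>i\<in>UNIV. \<bar>m$i\<bar>) = (\<Sum>i\<in>UNIV. \<bar>m'$i\<bar>)" by linarith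
    moreover have "(\<Sum>i\<in>UNIV - {j0}. \<bar>m$i\<bar>) = (\<Sum>i\<in>UNIV - {j0}. \<bar>m'$i\<bar>)"
      using oth by (intro sum.cong) auto
    ultimately have "\<bar>m$j0\<bar> = \<bar>m'$j0\<bar>" using split[of m] split[of m'] by linarith
    moreover have "(0 \<le> m$j0) = (0 \<le> m'$j0)" using mm(3) unfolding h_def by simp
    ultimately have "m$j0 = m'$j0" by (auto simp: abs_if split: if_splits)
    then have "m$i = m'$i" for i using oth by (cases "i = j0") auto
    then show "m = m'" by (simp add: vec_eq_iff)
  qed
  have img: "h ` M \<subseteq> R \<times> {0..2*c} \<times> UNIV"
  proof
    fix x assume "x \<in> h ` M"
    then obtain m where m: "m \<in> M" "x = h m" by blast
    have le: "\<bar>m$i\<bar> \<le> (\<Sum>i\<in>UNIV. \<bar>m$i\<bar>)" for i by (rule member_le_sum) auto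
    have "\<bar>m$i\<bar> \<le> int (n+c)" for i using le[of i] m(1) unfolding M_def by simp
    then have "(\<chi> i. if i = j0 then 0 else m$i) \<in> R" unfolding R_def by auto
    moreover have "nat ((\<Sum>i\<in>UNIV. \<bar>m$i\<bar>) - (int n - int c)) \<in> {0..2*c}" using m unfolding M_def by auto
    ultimately show "x \<in> R \<times> {0..2*c} \<times> UNIV" using m unfolding h_def by auto
  qed
  note bc = box_card[of "UNIV - {j0}" "n+c"]
  have finR: "finite R" using bc unfolding R_def by blast
  have fin: "finite (R \<times> {0..2*c} \<times> (UNIV :: bool set))" using finR by simp
  have "card M \<le> card (R \<times> {0..2*c} \<times> (UNIV :: bool set))"
    by (rule card_inj_on_le[OF inj img fin])
  also have "\<dots> = card R * ((2*c+1)*2)" by (simp add: card_cartesian_product)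
  also have "\<dots> \<le> (2*(n+c)+1)^(CARD('d) - 1) * ((2*c+1)*2)"
    using bc unfolding R_def[symmetric] by (intro mult_right_mono) (simp_all add: card_Diff_singleton)
  finally show ?thesis using finite_imageD[OF finite_subset[OF img fin] inj] unfolding M_def by blast
qed



lemma diag_elem:
  fixes X :: "((real^'d) \<times> (real^'d)) set"
  assumes X: "X \<in> Diag n"
  defines "c \<equiv> 2 * CARD('d) + 1"
  shows "\<exists>m S m' S'. X = diagonal (tess_face m S) (tess_face m' S') \<and>
     (\<forall>i. \<bar>m$i\<bar> \<le> int 1) \<and>
     int n - int c \<le> (\<Sum>i\<in>UNIV. \<bar>m'$i\<bar>) \<and> (\<Sum>i\<in>UNIV. \<bar>m'$i\<bar>) \<le> int n + int c"
proof -
  obtain A B where AB: "X = diagonal A B" "A \<in> low_faces" "B \<in> low_faces" "diagonal A B \<noteq> {}"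
    "comb_length A B n" "\<forall>(a,b) \<in> diagonal A B. initial_in_unit_cube a b"
    using X unfolding Diag_def by blast
  obtain m S where A: "A = tess_face m S" using AB(2) unfolding low_faces_def by blast
  obtain m' S' where B: "B = tess_face m' S'" using AB(3) unfolding low_faces_def by blast
  obtain a b where ab: "(a,b) \<in> diagonal A B" using AB(4) by auto
  have ab2: "a \<in> A" "b \<in> B" "a \<noteq> b" "open_segment a b \<inter> skeleton = {}"
    using ab unfolding diagonal_def by auto
  have cc: "cubes_crossed a b = n" using AB(5) ab unfolding comb_length_def by auto
  have "initial_in_unit_cube a b" using AB(6) ab by auto
  then obtain e where "closed_segment a (a + e *\<^sub>R (b - a)) \<subseteq> unit_cube 0"
    unfolding initial_in_unit_cube_def by blast
  then have "a \<in> unit_cube 0" by auto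
  then have a01: "0 \<le> a$i \<and> a$i \<le> 1" for i unfolding unit_cube_def by auto
  have mb: "\<bar>m$i\<bar> \<le> int 1" for i
  proof -
    have "real_of_int (m$i) \<le> a$i \<and> a$i \<le> real_of_int (m$i) + 1" using face_bounds ab2(1) A by blast
    then have "real_of_int (m$i) \<le> 1" "-1 \<le> real_of_int (m$i)" using a01[of i] by linarith+
    then show ?thesis by linarith
  qed
  define D where "D = (\<Sum>i\<in>UNIV. \<bar>b$i - a$i\<bar>)"
  have up: "real n \<le> D + CARD('d) + 1" using upper_bound[of a b] cc unfolding D_def by simp
  have lo: "D - CARD('d) \<le> real n" using lower_bound[OF ab2(4,3)] cc unfolding D_def by simp
  have ci: "\<bar>b$i - a$i\<bar> - 1 \<le> \<bar>real_of_int (m'$i)\<bar> \<and> \<bar>real_of_int (m'$i)\<bar> \<le> \<bar>b$i - a$i\<bar> + 1" for i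
  proof -
    have "real_of_int (m'$i) \<le> b$i \<and> b$i \<le> real_of_int (m'$i) + 1" using face_bounds ab2(2) B by blast
    then show ?thesis using a01[of i] by linarith
  qed
  have s1: "D - CARD('d) \<le> (\<Sum>i\<in>UNIV. \<bar>real_of_int (m'$i)\<bar>)"
  proof -
    have "(\<Sum>i\<in>UNIV. \<bar>b$i - a$i\<bar> - 1) \<le> (\<Sum>i\<in>UNIV. \<bar>real_of_int (m'$i)\<bar>)"
      by (rule sum_mono) (use ci in auto)
    then show ?thesis unfolding D_def by (simp add: sum_subtractf)
  qed
  have s2: "(\<Sum>i\<in>UNIV. \<bar>real_of_int (m'$i)\<bar>) \<le> D + CARD('d)"
  proof -
    have "(\<Sum>i\<in>UNIV. \<bar>real_of_int (m'$i)\<bar>) \<le> (\<Sum>i\<in>UNIV. \<bar>b$i - a$i\<bar> + 1)"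
      by (rule sum_mono) (use ci in auto)
    then show ?thesis unfolding D_def by (simp add: sum.distrib)
  qed
  have eqr: "real_of_int (\<Sum>i\<in>UNIV. \<bar>m'$i\<bar>) = (\<Sum>i\<in>UNIV. \<bar>real_of_int (m'$i)\<bar>)" by simp
  have "real_of_int (int n - int c) \<le> real_of_int (\<Sum>i\<in>UNIV. \<bar>m'$i\<bar>)"
    unfolding eqr c_def using s1 up by simp
  moreover have "real_of_int (\<Sum>i\<in>UNIV. \<bar>m'$i\<bar>) \<le> real_of_int (int n + int c)"
    unfolding eqr c_def using s2 lo by simp
  ultimately have "int n - int c \<le> (\<Sum>i\<in>UNIV. \<bar>m'$i\<bar>)" "(\<Sum>i\<in>UNIV. \<bar>m'$i\<bar>) \<le> int n + int c"
    by (simp_all only: of_int_le_iff)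
  then show ?thesis using AB(1) A B mb by blast
qed

theorem mainTheorem13:
  assumes "CARD('d::finite) \<ge> 2"
  shows "\<exists>C>0. \<forall>n::nat. n \<ge> 1 \<longrightarrow>
           finite (Diag n :: (((real^'d) \<times> (real^'d)) set) set) \<and>
           real (card (Diag n :: (((real^'d) \<times> (real^'d)) set) set)) \<le> C * real n ^ (CARD('d) - 1)"
proof -
  define d where "d = CARD('d)"
  define c where "c = 2 * d + 1"
  define Box where "Box = {r::int^'d. \<forall>i. (i\<in>UNIV \<longrightarrow> \<bar>r$i\<bar> \<le> int 1) \<and> (i\<notin>UNIV \<longrightarrow> r$i = 0)}"
  have finBox: "finite Box" using box_card[of UNIV 1] unfolding Box_def by blast
  define K0 where "K0 = card Box * 2^d * (((2*c+1)*2) * (2*c+3)^(d-1) * 2^d)"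
  define C where "C = real K0 + 1"
  have "C > 0" unfolding C_def by simp
  moreover have "finite (Diag n :: (((real^'d) \<times> (real^'d)) set) set) \<and>
           real (card (Diag n :: (((real^'d) \<times> (real^'d)) set) set)) \<le> C * real n ^ (CARD('d) - 1)"
    if n1: "n \<ge> 1" for n
  proof -
    define M where "M = {m::int^'d. int n - int c \<le> (\<Sum>i\<in>UNIV. \<bar>m$i\<bar>) \<and> (\<Sum>i\<in>UNIV. \<bar>m$i\<bar>) \<le> int n + int c}"
    note Mc = M_card[of n c, where 'd='d, folded M_def]
    define F where "F p = diagonal (tess_face (fst (fst p)) (snd (fst p))) (tess_face (fst (snd p)) (snd (snd p)))"
      for p :: "((int^'d) \<times> 'd set) \<times> ((int^'d) \<times> 'd set)"
    define Q where "Q = (Box \<times> (UNIV :: 'd set set)) \<times> (M \<times> (UNIV :: 'd set set))"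
    have sub: "(Diag n :: (((real^'d) \<times> (real^'d)) set) set) \<subseteq> F ` Q"
    proof
      fix X :: "((real^'d) \<times> (real^'d)) set" assume "X \<in> Diag n"
      from diag_elem[OF this] obtain m S m' S' where
        "X = diagonal (tess_face m S) (tess_face m' S')" "\<forall>i. \<bar>m$i\<bar> \<le> int 1"
        "int n - int c \<le> (\<Sum>i\<in>UNIV. \<bar>m'$i\<bar>)" "(\<Sum>i\<in>UNIV. \<bar>m'$i\<bar>) \<le> int n + int c"
        unfolding c_def d_def by blast
      then show "X \<in> F ` Q" unfolding F_def Q_def Box_def M_def
        by (intro image_eqI[of _ _ "((m,S),(m',S'))"]) auto
    qed
    have cU: "card (UNIV :: 'd set set) = 2^d" unfolding d_def
    proof -
      have "card (UNIV :: 'd set set) = card (Pow (UNIV :: 'd set))" by simp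
      also have "\<dots> = 2 ^ CARD('d)" by (rule card_Pow) simp
      finally show "card (UNIV :: 'd set set) = 2 ^ CARD('d)" .
    qed
    have finQ: "finite Q" unfolding Q_def using finBox Mc by simp
    have "card (Diag n :: (((real^'d) \<times> (real^'d)) set) set) \<le> card (F ` Q)"
      by (rule card_mono[OF _ sub]) (use finQ in simp)
    also have "\<dots> \<le> card Q" using finQ by (rule card_image_le)
    also have "\<dots> = card Box * 2^d * (card M * 2^d)" unfolding Q_def
      by (simp add: card_cartesian_product cU d_def)
    also have "\<dots> \<le> card Box * 2^d * (((2*(n+c)+1)^(d-1) * ((2*c+1)*2)) * 2^d)"
      using Mc unfolding d_def by (intro mult_left_mono mult_right_mono) auto
    also have "\<dots> \<le> card Box * 2^d * ((((2*c+3)*n)^(d-1) * ((2*c+1)*2)) * 2^d)"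
    proof -
      have "c \<le> c*n" using n1 by simp
      have eqn: "(2*c+3)*n = 2*(c*n) + 3*n" by (simp add: algebra_simps)
      have "\<forall>x. c \<le> x \<longrightarrow> 2*(n+c)+1 \<le> 2*x + 3*n" using n1 by auto
      then have "2*(n+c)+1 \<le> 2*(c*n) + 3*n" using \<open>c \<le> c*n\<close> by blast
      then have "2*(n+c)+1 \<le> (2*c+3)*n" unfolding eqn .
      then have "(2*(n+c)+1)^(d-1) \<le> ((2*c+3)*n)^(d-1)" by (rule power_mono) simp
      then show ?thesis by (intro mult_left_mono mult_right_mono) auto
    qed
    also have "\<dots> = K0 * n^(d-1)" unfolding K0_def power_mult_distrib by (simp only: mult_ac)
    finally have "card (Diag n :: (((real^'d) \<times> (real^'d)) set) set) \<le> K0 * n^(d-1)" .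
    then have "real (card (Diag n :: (((real^'d) \<times> (real^'d)) set) set)) \<le> real (K0 * n^(d-1))"
      by (simp only: of_nat_le_iff)
    then have "real (card (Diag n :: (((real^'d) \<times> (real^'d)) set) set)) \<le> real K0 * real n^(d-1)"
      by simp
    also have "\<dots> \<le> C * real n^(d-1)" unfolding C_def by (intro mult_right_mono) auto
    finally show ?thesis using finite_subset[OF sub] finQ unfolding d_def by blast
  qed
  ultimately show ?thesis by blast
qed


end
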